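(* Let $m,b\ge1$ and let $\varepsilon:(\mathbb{F}_2)^{mb}\to(\mathbb{F}_2)^{2^m b}$ be defined by $\varepsilon(v_1,\dots,v_b)=(\varepsilon'(v_1),\dots,\varepsilon'(v_b))$ for $v_j\in(\mathbb{F}_2)^m$. Then $\dim_{\mathbb{F}_2}\langle\varepsilon((\mathbb{F}_2)^{mb})\rangle=2^m b-(b-1)$.
   Context: Identify $(\mathbb{F}_2)^m$ with $\mathbb{F}_{2^m}=\mathbb{F}_2[x]/(p)$ for a primitive polynomial $p$ of degree $m$, and let $\gamma$ be a primitive element of $\mathbb{F}_{2^m}$ (a root of $p$). Let $e_1,\dots,e_{2^m}$ be the standard basis of $(\mathbb{F}_2)^{2^m}$, and define $\varepsilon':\mathbb{F}_{2^m}\to(\mathbb{F}_2)^{2^m}$ by $\varepsilon'(0)=e_1$ and $\varepsilon'(\gamma^i)=e_{i+1}$ for $1\le i\le 2^m-1$. $\langle S\rangle$ denotes the $\mathbb{F}_2$-linear span of $S$. *)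

theory Defs
  imports "HOL-Library.Z2" "HOL-Computational_Algebra.Polynomial"
    "HOL-Computational_Algebra.Factorial_Ring" "HOL-Library.Function_Algebras"
begin

text \<open>(F_2)^n is rendered as functions nat => bit vanishing outside the coordinates 0..n-1
  (coordinate k here = coordinate k+1 in the paper).\<close>
definition F2vec :: "nat \<Rightarrow> (nat \<Rightarrow> bit) set" where
  "F2vec n = {v. \<forall>k\<ge>n. v k = 0}"

text \<open>Standard basis vector (0-indexed): std_e i is the paper's e_(i+1).\<close>
definition std_e :: "nat \<Rightarrow> nat \<Rightarrow> bit" where
  "std_e i = (\<lambda>k. if k = i then 1 else 0)"

definition f2scale :: "bit \<Rightarrow> (nat \<Rightarrow> bit) \<Rightarrow> (nat \<Rightarrow> bit)" where
  "f2scale c v = (\<lambda>k. c * v k)"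

definition primitive_poly :: "bit poly \<Rightarrow> nat \<Rightarrow> bool" where
  "primitive_poly p m \<longleftrightarrow> degree p = m \<and> irreducible p \<and>
     [:0, 1:] ^ (2 ^ m - 1) mod p = 1 \<and>
     (\<forall>k. 0 < k \<and> k < 2 ^ m - 1 \<longrightarrow> [:0, 1:] ^ k mod p \<noteq> 1)"

text \<open>Identification of (F_2)^m with F_2[x]/(p) (residues of degree < m):
  (v_0,...,v_(m-1)) corresponds to sum v_k x^k.\<close>
definition vec_to_poly :: "nat \<Rightarrow> (nat \<Rightarrow> bit) \<Rightarrow> bit poly" where
  "vec_to_poly m v = (\<Sum>k<m. monom (v k) k)"

text \<open>epsilon' : F_(2^m) -> (F_2)^(2^m), with gamma = class of x:
  0 goes to e_1, gamma^i goes to e_(i+1) for 1 <= i <= 2^m - 1.\<close>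
definition eps' :: "bit poly \<Rightarrow> bit poly \<Rightarrow> nat \<Rightarrow> bit" where
  "eps' p q = (if q = 0 then std_e 0
     else std_e (THE i. 1 \<le> i \<and> i \<le> 2 ^ degree p - 1 \<and> [:0, 1:] ^ i mod p = q))"

text \<open>Block j of the input is (v (j*m), ..., v (j*m+m-1)); block j of the output
  occupies coordinates j*2^m, ..., j*2^m + 2^m - 1.\<close>
definition eps :: "bit poly \<Rightarrow> nat \<Rightarrow> nat \<Rightarrow> (nat \<Rightarrow> bit) \<Rightarrow> nat \<Rightarrow> bit" where
  "eps p m b v = (\<lambda>k. if k < 2 ^ m * b then
      eps' p (vec_to_poly m (\<lambda>i. v ((k div 2 ^ m) * m + i))) (k mod 2 ^ m) else 0)"

end

theory Submission
  imports Defs "HOL-Library.FuncSet"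
begin


interpretation V: vector_space f2scale
proof unfold_locales
  fix a b :: bit and x y :: "nat \<Rightarrow> bit"
  show "f2scale a (x + y) = f2scale a x + f2scale a y"
    unfolding f2scale_def plus_fun_def by (rule ext) (rule distrib_left)
  show "f2scale (a + b) x = f2scale a x + f2scale b x"
    unfolding f2scale_def plus_fun_def by (rule ext) (rule distrib_right)
  show "f2scale a (f2scale b x) = f2scale (a * b) x"
    unfolding f2scale_def by (rule ext) (rule mult.assoc[symmetric])
  show "f2scale 1 x = x"
    unfolding f2scale_def by (rule ext) (rule mult_1_left)
qed

lemma sum_apply_fun: "(sum f A :: nat \<Rightarrow> bit) k = (\<Sum>a\<in>A. f a k)"
  by (induction A rule: infinite_finite_induct) auto

lemma bit_add_self[simp]: "(x::bit) + x = 0"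
  by (cases x) auto

lemma divmod_eq: "(i::nat) < N \<Longrightarrow> (k = j*N+i) \<longleftrightarrow> (k div N = j \<and> k mod N = i)"
proof
  assume "i < N" "k = j*N+i" thus "k div N = j \<and> k mod N = i" by auto
next
  assume "i < N" "k div N = j \<and> k mod N = i" thus "k = j*N+i"
    by (metis div_mult_mod_eq)
qed

definition evf :: "nat \<Rightarrow> nat \<Rightarrow> (nat\<Rightarrow>nat) \<Rightarrow> nat \<Rightarrow> bit" where
  "evf N b f = (\<lambda>k. if k < N*b \<and> k mod N = f (k div N) then 1 else 0)"
definition dd :: "nat \<Rightarrow> nat \<Rightarrow> nat \<Rightarrow> nat \<Rightarrow> bit" where
  "dd N j i = (\<lambda>k. if k = j*N \<or> k = j*N+i then 1 else 0)"

lemma lt_Nb: "(N::nat) > 0 \<Longrightarrow> (k < N*b) = (k div N < b)"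
  using div_less_iff_less_mult[of N k b] by (simp add: ac_simps)

lemma dd_apply: "N > 0 \<Longrightarrow> i < N \<Longrightarrow> dd N j i k = (if k div N = j \<and> (k mod N = 0 \<or> k mod N = i) then 1 else 0)"
  unfolding dd_def using divmod_eq[of 0 N k j] divmod_eq[of i N k j] by auto

lemma evf_apply: "N > 0 \<Longrightarrow> evf N b f k = (if k div N < b \<and> k mod N = f (k div N) then 1 else 0)"
  unfolding evf_def using lt_Nb[of N k b] by simp

lemma evf_decomp:
  assumes N: "N > 0" and f: "\<forall>j<b. f j < N"
  shows "evf N b f = evf N b (\<lambda>_. 0) + (\<Sum>j<b. if f j = 0 then 0 else dd N j (f j))"
proof (rule ext)
  fix k
  define q where "q = k div N"
  define r where "r = k mod N"
  have g: "(if f j = 0 then 0 else dd N j (f j)) k =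
     (if j = q then (if f q \<noteq> 0 \<and> (r = 0 \<or> r = f q) then 1 else 0) else 0)" if "j < b" for j
    using that f N by (auto simp: dd_apply q_def r_def)
  have "(\<Sum>j<b. if f j = 0 then 0 else dd N j (f j)) k =
      (if q < b then (if f q \<noteq> 0 \<and> (r = 0 \<or> r = f q) then 1 else 0) else 0)"
    unfolding sum_apply_fun by (simp add: g)
  thus "evf N b f k = (evf N b (\<lambda>_. 0) + (\<Sum>j<b. if f j = 0 then 0 else dd N j (f j))) k"
    using N by (auto simp: evf_apply q_def[symmetric] r_def[symmetric])
qed

lemma dd_decomp:
  assumes N: "N > 0" and j: "j < b" and i: "i < N" "i \<noteq> 0"
  shows "dd N j i = evf N b (\<lambda>_. 0) + evf N b (\<lambda>j'. if j' = j then i else 0)"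
proof (rule ext)
  fix k
  show "dd N j i k = (evf N b (\<lambda>_. 0) + evf N b (\<lambda>j'. if j' = j then i else 0)) k"
    using N j i by (auto simp: evf_apply dd_apply)
qed

lemma dd_at: "0 < i \<Longrightarrow> i < N \<Longrightarrow> 0 < i' \<Longrightarrow> i' < N \<Longrightarrow>
   dd N j' i' (j*N+i) = (if j' = j \<and> i' = i then 1 else 0)"
  by (auto simp: dd_apply)

lemma W0_at: "0 < i \<Longrightarrow> i < N \<Longrightarrow> evf N b (\<lambda>_. 0) (j*N+i) = 0"
  by (simp add: evf_apply)

lemma W0_0: "0 < N \<Longrightarrow> 0 < b \<Longrightarrow> evf N b (\<lambda>_. 0) 0 = 1"
  by (simp add: evf_apply)

lemma inj_dd: assumes N: "N > 0" shows "inj_on (\<lambda>(j,i). dd N j i) ({..<b} \<times> {1..<N})"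
proof (rule inj_onI)
  fix x y assume x: "x \<in> {..<b} \<times> {1..<N}" and y: "y \<in> {..<b} \<times> {1..<N}"
    and e: "(\<lambda>(j,i). dd N j i) x = (\<lambda>(j,i). dd N j i) y"
  obtain j i where xe: "x = (j,i)" by (cases x)
  obtain j' i' where ye: "y = (j',i')" by (cases y)
  from e have "dd N j i (j'*N+i') = dd N j' i' (j'*N+i')" by (simp add: xe ye)
  with x y show "x = y" by (simp add: xe ye dd_at split: if_splits)
qed

lemma W0_notin: "N > 0 \<Longrightarrow> evf N b (\<lambda>_. 0) \<notin> (\<lambda>(j,i). dd N j i) ` ({..<b} \<times> {1..<N})"
proof clarify
  fix j i assume *: "N > 0" "j < b" "i \<in> {1..<N}" and e: "evf N b (\<lambda>_. 0) = dd N j i"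
  from e have "evf N b (\<lambda>_. 0) (j*N+i) = dd N j i (j*N+i)" by simp
  with * show False by (simp add: dd_at W0_at)
qed

lemma card_B: "N > 0 \<Longrightarrow> card (insert (evf N b (\<lambda>_. 0)) ((\<lambda>(j,i). dd N j i) ` ({..<b} \<times> {1..<N})))
   = Suc (b * (N - 1))"
  using W0_notin[of N b] inj_dd[of N b] by (simp add: card_image)

lemma indep_B:
  assumes N: "N > 0" and b: "b > 0"
  shows "V.independent (insert (evf N b (\<lambda>_. 0)) ((\<lambda>(j,i). dd N j i) ` ({..<b} \<times> {1..<N})))"
    (is "V.independent (insert ?w ?D)")
proof (rule V.independent_if_scalars_zero)
  show "finite (insert ?w ?D)" by simp
  fix c x assume S: "(\<Sum>x\<in>insert ?w ?D. f2scale (c x) x) = 0" and x: "x \<in> insert ?w ?D"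
  have ev: "(\<Sum>u\<in>insert ?w ?D. c u * u k) = 0" for k
    using fun_cong[OF S, of k] by (simp add: sum_apply_fun f2scale_def)
  have key: "c x = 0" if "x \<in> insert ?w ?D" "x k = 1" "\<And>u. u \<in> insert ?w ?D - {x} \<Longrightarrow> c u * u k = 0" for x k
  proof -
    have "0 = (\<Sum>u\<in>insert ?w ?D. c u * u k)" using ev by simp
    also have "\<dots> = c x * x k + (\<Sum>u\<in>insert ?w ?D - {x}. c u * u k)"
      by (rule sum.remove[OF _ that(1)]) simp
    also have "(\<Sum>u\<in>insert ?w ?D - {x}. c u * u k) = 0" using that(3) by (intro sum.neutral) blast
    finally show ?thesis using that(2) by simp
  qed
  have Dz: "c u = 0" if "u \<in> ?D" for u
  proof -
    obtain j i where ji: "j < b" "i \<in> {1..<N}" "u = dd N j i" using \<open>u \<in> ?D\<close> by auto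
    show ?thesis
    proof (rule key[of u "j*N+i"])
      show "u \<in> insert ?w ?D" using that by simp
      show "u (j*N+i) = 1" using ji by (simp add: dd_at)
      fix v assume v: "v \<in> insert ?w ?D - {u}"
      show "c v * v (j*N+i) = 0"
      proof (cases "v = ?w")
        case True thus ?thesis using ji by (simp add: W0_at)
      next
        case False
        then obtain j' i' where "j' < b" "i' \<in> {1..<N}" "v = dd N j' i'" using v by auto
        thus ?thesis using ji v by (auto simp: dd_at)
      qed
    qed
  qed
  show "c x = 0"
  proof (cases "x = ?w")
    case True
    show ?thesis
    proof (rule key[of x 0])
      show "x \<in> insert ?w ?D" using x .
      show "x 0 = 1" using True N b by (simp add: W0_0)
      fix v assume "v \<in> insert ?w ?D - {x}"
      thus "c v * v 0 = 0" using True Dz by auto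
    qed
  next
    case False thus ?thesis using x Dz by auto
  qed
qed

lemma dim_abstract:
  assumes N: "N > 0" and b: "b > 0"
    and a: "\<And>e. e \<in> E \<Longrightarrow> \<exists>f. (\<forall>j<b. f j < N) \<and> e = evf N b f"
    and c: "\<And>f. (\<forall>j<b. f j < N) \<Longrightarrow> evf N b f \<in> E"
  shows "V.dim (V.span E) = Suc (b * (N - 1))"
proof -
  define B where "B = insert (evf N b (\<lambda>_. 0)) ((\<lambda>(j,i). dd N j i) ` ({..<b} \<times> {1..<N}))"
  have W0B: "evf N b (\<lambda>_. 0) \<in> V.span B" unfolding B_def by (intro V.span_base) simp
  have ddB: "dd N j i \<in> V.span B" if "j < b" "1 \<le> i" "i < N" for j i
    unfolding B_def using that by (intro V.span_base) force
  have EB: "E \<subseteq> V.span B"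
  proof
    fix e assume "e \<in> E"
    then obtain f where f: "\<forall>j<b. f j < N" and e: "e = evf N b f" using a by blast
    show "e \<in> V.span B"
      unfolding e evf_decomp[OF N f]
      using f by (intro V.span_add W0B V.span_sum) (auto intro: ddB V.span_zero)
  qed
  have W0E: "evf N b (\<lambda>_. 0) \<in> V.span E" using N by (intro V.span_base c) simp
  have BE: "B \<subseteq> V.span E"
  proof
    fix x assume "x \<in> B"
    then consider "x = evf N b (\<lambda>_. 0)" | j i where "j < b" "1 \<le> i" "i < N" "x = dd N j i"
      unfolding B_def by auto
    thus "x \<in> V.span E"
    proof cases
      case 1 thus ?thesis using W0E by simp
    next
      case 2
      have "evf N b (\<lambda>j'. if j' = j then i else 0) \<in> E" using 2 N by (intro c) auto
      moreover have i0: "i \<noteq> 0" using 2 by simp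
      ultimately show ?thesis unfolding 2 dd_decomp[OF N 2(1) 2(3) i0] using 2
        by (intro V.span_add W0E V.span_base) auto
    qed
  qed
  have "V.span E = V.span B" using EB BE V.span_eq by blast
  hence "V.dim (V.span E) = V.dim B" by simp
  also have "\<dots> = card B" using indep_B[OF N b] unfolding B_def by (rule V.dim_eq_card_independent)
  also have "\<dots> = Suc (b * (N - 1))" unfolding B_def by (rule card_B[OF N])
  finally show ?thesis .
qed

lemma UNIV_bit: "(UNIV :: bit set) = {0, 1}"
proof (rule set_eqI)
  fix x :: bit show "x \<in> UNIV \<longleftrightarrow> x \<in> {0, 1}" using bit_not_zero_iff[of x] by auto
qed

lemma card_UNIV_bit: "card (UNIV :: bit set) = 2"
  unfolding UNIV_bit by simp



lemma coeff_vtp: "coeff (vec_to_poly m v) k = (if k < m then v k else 0)"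
  unfolding vec_to_poly_def coeff_sum by simp

lemma degree_vtp: "m > 0 \<Longrightarrow> degree (vec_to_poly m v) < m"
  unfolding vec_to_poly_def
  by (intro degree_sum_less) (auto intro: le_less_trans[OF degree_monom_le])

lemma vtp_coeff: "degree q < m \<Longrightarrow> vec_to_poly m (\<lambda>k. coeff q k) = q"
  by (rule poly_eqI) (auto simp: coeff_vtp coeff_eq_0)

lemma vtp_cong: "(\<And>k. k < m \<Longrightarrow> v k = w k) \<Longrightarrow> vec_to_poly m v = vec_to_poly m w"
  unfolding vec_to_poly_def by (intro sum.cong) auto



lemma card_deg_less:
  assumes m: "m > 0"
  shows "card {q :: bit poly. degree q < m} = 2 ^ m"
proof -
  have img: "{q :: bit poly. degree q < m} = vec_to_poly m ` ({..<m} \<rightarrow>\<^sub>E UNIV)"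
  proof
    show "{q :: bit poly. degree q < m} \<subseteq> vec_to_poly m ` ({..<m} \<rightarrow>\<^sub>E UNIV)"
    proof
      fix q :: "bit poly" assume "q \<in> {q. degree q < m}"
      hence dq: "degree q < m" by simp
      have "vec_to_poly m (restrict (\<lambda>k. coeff q k) {..<m}) = vec_to_poly m (\<lambda>k. coeff q k)"
        by (rule vtp_cong) simp
      also have "\<dots> = q" using dq by (rule vtp_coeff)
      finally have "q = vec_to_poly m (restrict (\<lambda>k. coeff q k) {..<m})" by simp
      moreover have "restrict (\<lambda>k. coeff q k) {..<m} \<in> {..<m} \<rightarrow>\<^sub>E UNIV" by simp
      ultimately show "q \<in> vec_to_poly m ` ({..<m} \<rightarrow>\<^sub>E UNIV)" by blast
    qed
    show "vec_to_poly m ` ({..<m} \<rightarrow>\<^sub>E UNIV) \<subseteq> {q :: bit poly. degree q < m}"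
      using degree_vtp[OF m] by blast
  qed
  have inj: "inj_on (vec_to_poly m) ({..<m} \<rightarrow>\<^sub>E UNIV)"
  proof (rule inj_onI)
    fix v w assume v: "v \<in> {..<m} \<rightarrow>\<^sub>E UNIV" and w: "w \<in> {..<m} \<rightarrow>\<^sub>E UNIV"
      and e: "vec_to_poly m v = vec_to_poly m w"
    show "v = w"
    proof (rule ext)
      fix k show "v k = w k"
      proof (cases "k < m")
        case True thus ?thesis using arg_cong[OF e, of "\<lambda>q. coeff q k"] by (simp add: coeff_vtp)
      next
        case False thus ?thesis using PiE_arb[OF v, of k] PiE_arb[OF w, of k] by simp
      qed
    qed
  qed
  have "card ({..<m} \<rightarrow>\<^sub>E (UNIV::bit set)) = 2 ^ m"
    by (simp add: card_PiE card_UNIV_bit)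
  thus ?thesis unfolding img card_image[OF inj] .
qed



context
  fixes p :: "bit poly" and m :: nat
  assumes m: "m \<ge> 1" and pp: "primitive_poly p m"
begin

lemma degp: "degree p = m" using pp unfolding primitive_poly_def by simp
lemma p0: "p \<noteq> 0" using degp m by auto
lemma pow_e: "[:0,1:] ^ (2^m - 1) mod p = 1" using pp unfolding primitive_poly_def by simp
lemma pow_ne1: "0 < k \<Longrightarrow> k < 2^m - 1 \<Longrightarrow> [:0,1:] ^ k mod p \<noteq> 1"
  using pp unfolding primitive_poly_def by simp

lemma pow_nz: assumes "i \<le> 2^m - 1" shows "[:0,1:] ^ i mod p \<noteq> 0"
proof
  assume z: "[:0,1:] ^ i mod p = 0"
  have "1 = [:0,1:] ^ (2^m - 1) mod p" using pow_e by simp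
  also have "\<dots> = ([:0,1:] ^ i * [:0,1:] ^ (2^m - 1 - i)) mod p"
  proof -
    have "i + (2^m - 1 - i) = 2^m - 1" using assms by simp
    thus ?thesis by (simp only: power_add[symmetric])
  qed
  also have "\<dots> = (([:0,1:] ^ i mod p) * [:0,1:] ^ (2^m - 1 - i)) mod p"
    by (simp add: mod_mult_left_eq)
  also have "\<dots> = 0" using z by simp
  finally show False by simp
qed

lemma pow_inj_aux:
  assumes i: "1 \<le> i" "i < j" "j \<le> 2^m - 1" and e: "[:0,1:] ^ i mod p = [:0,1:] ^ j mod p"
  shows False
proof -
  let ?x = "[:0,1:] :: bit poly"
  let ?e = "2^m - 1 :: nat"
  have "1 = ?x ^ ?e mod p" using pow_e by simp
  also have "\<dots> = (?x ^ i * ?x ^ (?e - i)) mod p"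
  proof -
    have "i + (?e - i) = ?e" using i by simp
    thus ?thesis by (simp only: power_add[symmetric])
  qed
  also have "\<dots> = ((?x ^ i mod p) * ?x ^ (?e - i)) mod p"
    by (simp add: mod_mult_left_eq)
  also have "\<dots> = ((?x ^ j mod p) * ?x ^ (?e - i)) mod p" using e by simp
  also have "\<dots> = (?x ^ j * ?x ^ (?e - i)) mod p"
    by (simp add: mod_mult_left_eq)
  also have "?x ^ j * ?x ^ (?e - i) = ?x ^ ?e * ?x ^ (j - i)"
  proof -
    have "j + (?e - i) = ?e + (j - i)" using i by simp
    thus ?thesis by (simp only: power_add[symmetric])
  qed
  also have "(?x ^ ?e * ?x ^ (j - i)) mod p = ((?x ^ ?e mod p) * ?x ^ (j - i)) mod p"
    by (simp add: mod_mult_left_eq)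
  also have "\<dots> = ?x ^ (j - i) mod p" using pow_e by simp
  finally have "?x ^ (j - i) mod p = 1" by simp
  moreover have "0 < j - i" "j - i < ?e" using i by auto
  ultimately show False using pow_ne1 by blast
qed

lemma pow_inj:
  assumes "1 \<le> i" "i \<le> 2^m - 1" "1 \<le> j" "j \<le> 2^m - 1"
    and e: "[:0,1:] ^ i mod p = [:0,1:] ^ j mod p"
  shows "i = j"
proof (rule ccontr)
  assume "i \<noteq> j"
  hence "i < j \<or> j < i" by arith
  thus False using pow_inj_aux[of i j] pow_inj_aux[of j i] assms by auto
qed

lemma pow_deg: "i \<le> 2^m - 1 \<Longrightarrow> degree ([:0,1:] ^ i mod p) < m"
  using degree_mod_less'[OF p0 pow_nz] degp by simp

lemma pow_onto: "(\<lambda>i. [:0,1:] ^ i mod p) ` {1..2^m - 1} = {q. degree q < m} - {0}"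
proof (rule card_subset_eq)
  have "card {q :: bit poly. degree q < m} = 2 ^ m" using card_deg_less m by simp
  hence fin: "finite {q :: bit poly. degree q < m}" by (intro card_ge_0_finite) simp
  thus "finite ({q. degree q < m} - {0::bit poly})" by simp
  show "(\<lambda>i. [:0,1:] ^ i mod p) ` {1..2^m - 1} \<subseteq> {q. degree q < m} - {0}"
  proof (rule image_subsetI)
    fix i :: nat assume "i \<in> {1..2^m - 1}"
    hence "i \<le> 2^m - 1" by simp
    hence a: "degree (([:0,1:] :: bit poly) ^ i mod p) < m" and b: "([:0,1:] :: bit poly) ^ i mod p \<noteq> 0"
      by (rule pow_deg, rule pow_nz)
    from b have b': "([:0,1:] :: bit poly) ^ i mod p \<notin> {0}" by blast
    show "([:0,1:] :: bit poly) ^ i mod p \<in> {q. degree q < m} - {0}" by (intro DiffI CollectI a b')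
  qed
  have inj: "inj_on (\<lambda>i. [:0,1:] ^ i mod p) {1..2^m - 1}"
  proof (rule inj_onI)
    fix i j :: nat assume i: "i \<in> {1..2^m - 1}" and j: "j \<in> {1..2^m - 1}"
      and e: "([:0,1:] :: bit poly) ^ i mod p = [:0,1:] ^ j mod p"
    from i have i1: "1 \<le> i" and i2: "i \<le> 2^m - 1" by simp_all
    from j have j1: "1 \<le> j" and j2: "j \<le> 2^m - 1" by simp_all
    show "i = j" by (rule pow_inj[OF i1 i2 j1 j2 e])
  qed
  have "(0::bit poly) \<in> {q. degree q < m}" using m by simp
  hence "card ({q. degree q < m} - {0::bit poly}) = 2^m - 1"
    using \<open>card {q :: bit poly. degree q < m} = 2 ^ m\<close> fin by (simp add: card_Diff_singleton)
  thus "card ((\<lambda>i. [:0,1:] ^ i mod p) ` {1..2^m - 1}) = card ({q. degree q < m} - {0::bit poly})"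
    using card_image[OF inj] by simp
qed

lemma eps'_pow: assumes "1 \<le> i" "i \<le> 2^m - 1" shows "eps' p ([:0,1:] ^ i mod p) = std_e i"
proof -
  have "(THE i'. 1 \<le> i' \<and> i' \<le> 2 ^ degree p - 1 \<and> [:0, 1:] ^ i' mod p = [:0,1:] ^ i mod p) = i"
  proof (rule the_equality)
    show "1 \<le> i \<and> i \<le> 2 ^ degree p - 1 \<and> [:0, 1:] ^ i mod p = [:0,1:] ^ i mod p"
      using assms degp by simp
    fix i' assume h: "1 \<le> i' \<and> i' \<le> 2 ^ degree p - 1 \<and> [:0, 1:] ^ i' mod p = [:0,1:] ^ i mod p"
    hence h1: "1 \<le> i'" and h2: "i' \<le> 2^m - 1" using degp by simp_all
    from h have h3: "[:0, 1:] ^ i' mod p = [:0,1:] ^ i mod p" by (elim conjE)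
    show "i' = i" by (rule pow_inj[OF h1 h2 assms h3])
  qed
  thus ?thesis unfolding eps'_def using pow_nz[OF assms(2)] by simp
qed

lemma eps'_range: "\<exists>i < 2^m. eps' p (vec_to_poly m v) = std_e i"
proof (cases "vec_to_poly m v = 0")
  case True thus ?thesis unfolding eps'_def by (intro exI[of _ 0]) simp
next
  case False
  have "vec_to_poly m v \<in> {q. degree q < m} - {0}" using False degree_vtp[of m v] m by simp
  then obtain i where i: "1 \<le> i" "i \<le> 2^m - 1" "vec_to_poly m v = [:0,1:] ^ i mod p"
    unfolding pow_onto[symmetric] by auto
  hence "eps' p (vec_to_poly m v) = std_e i" using eps'_pow by simp
  moreover have "i < 2^m" using i(2) by (simp add: le_diff_conv2 Suc_le_eq)
  ultimately show ?thesis by blast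
qed

lemma eps'_onto: assumes "i < 2^m" shows "\<exists>w. eps' p (vec_to_poly m w) = std_e i"
proof (cases "i = 0")
  case True
  have "vec_to_poly m (\<lambda>_. 0) = 0" unfolding vec_to_poly_def by simp
  thus ?thesis unfolding eps'_def using True by (intro exI[of _ "\<lambda>_. 0"]) simp
next
  case False
  hence i: "1 \<le> i" "i \<le> 2^m - 1" using assms by auto
  have "vec_to_poly m (\<lambda>k. coeff ([:0,1:] ^ i mod p) k) = [:0,1:] ^ i mod p"
    by (rule vtp_coeff) (rule pow_deg[OF i(2)])
  thus ?thesis using eps'_pow[OF i] by metis
qed

end



lemma eps_evf:
  assumes m: "m \<ge> 1" and pp: "primitive_poly p m"
  shows "\<exists>f. (\<forall>j<b. f j < 2^m) \<and> eps p m b v = evf (2^m) b f"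
proof -
  define F where "F j = (SOME i. i < 2^m \<and> eps' p (vec_to_poly m (\<lambda>i. v (j*m+i))) = std_e i)" for j
  have F: "F j < 2^m \<and> eps' p (vec_to_poly m (\<lambda>i. v (j*m+i))) = std_e (F j)" for j
    unfolding F_def by (rule someI_ex) (use eps'_range[OF m pp] in blast)
  have "eps p m b v = evf (2^m) b F"
  proof (rule ext)
    fix k
    show "eps p m b v k = evf (2^m) b F k"
      unfolding eps_def evf_def using F[of "k div 2^m"] by (simp add: std_e_def)
  qed
  thus ?thesis using F by blast
qed

lemma evf_eps:
  assumes m: "m \<ge> 1" and pp: "primitive_poly p m" and f: "\<forall>j<b. f j < 2^m"
  shows "evf (2^m) b f \<in> eps p m b ` F2vec (m*b)"
proof -
  define W where "W i = (SOME w. eps' p (vec_to_poly m w) = std_e i)" for i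
  have W: "eps' p (vec_to_poly m (W i)) = std_e i" if "i < 2^m" for i
    unfolding W_def by (rule someI_ex[OF eps'_onto[OF m pp that]])
  define v where "v k = (if k < m*b then W (f (k div m)) (k mod m) else 0)" for k
  have vF: "v \<in> F2vec (m*b)" unfolding F2vec_def v_def by simp
  have blk: "vec_to_poly m (\<lambda>i. v (j*m+i)) = vec_to_poly m (W (f j))" if j: "j < b" for j
  proof (rule vtp_cong)
    fix i assume i: "i < m"
    have "j*m + i < j*m + m" using i by simp
    also have "\<dots> = (Suc j) * m" by simp
    also have "\<dots> \<le> b * m" using j by (intro mult_right_mono) auto
    finally have lt: "j*m+i < m*b" by (simp add: mult.commute)
    have "(j*m+i) div m = j" "(j*m+i) mod m = i" using i by auto
    thus "v (j*m+i) = W (f j) i" using lt unfolding v_def by simp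
  qed
  have "eps p m b v = evf (2^m) b f"
  proof (rule ext)
    fix k
    show "eps p m b v k = evf (2^m) b f k"
    proof (cases "k < 2^m * b")
      case True
      hence jb: "k div 2^m < b" using lt_Nb[of "2^m" k b] by simp
      show ?thesis unfolding eps_def evf_def
        using True blk[OF jb] W[of "f (k div 2^m)"] f jb by (simp add: std_e_def)
    next
      case False thus ?thesis unfolding eps_def evf_def by simp
    qed
  qed
  thus ?thesis using vF by (metis image_eqI)
qed

theorem mainTheorem5:
  fixes p :: "bit poly" and m b :: nat
  assumes "m \<ge> 1" and "b \<ge> 1" and "primitive_poly p m"
  shows "vector_space.dim f2scale (module.span f2scale (eps p m b ` F2vec (m * b)))
           = 2 ^ m * b - (b - 1)"
proof -
  have N: "(2::nat)^m > 0" by simp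
  have b: "b > 0" using assms by simp
  have "V.dim (V.span (eps p m b ` F2vec (m * b))) = Suc (b * (2^m - 1))"
  proof (rule dim_abstract[OF N b])
    fix e assume "e \<in> eps p m b ` F2vec (m * b)"
    then obtain v where "e = eps p m b v" by blast
    thus "\<exists>f. (\<forall>j<b. f j < 2^m) \<and> e = evf (2^m) b f" using eps_evf[OF assms(1,3)] by blast
  next
    fix f :: "nat \<Rightarrow> nat" assume "\<forall>j<b. f j < 2^m"
    thus "evf (2^m) b f \<in> eps p m b ` F2vec (m * b)" by (rule evf_eps[OF assms(1,3)])
  qed
  moreover have "Suc (b * (2^m - 1)) = 2 ^ m * b - (b - 1)"
  proof -
    have "b * (2^m - 1) = 2^m * b - b" by (simp add: diff_mult_distrib2 mult.commute)
    moreover have "b \<le> 2^m * b" using N by simp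
    ultimately show ?thesis using b by linarith
  qed
  ultimately show ?thesis by simp
qed


end
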